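(* Let $N$ be a galled tree on $\mathcal{X}$ with at least two galls, let $\mathcal{G}$ be a finite set of genes, let $G:\mathcal{X}\to 2^{\mathcal{G}}$ be a genome assignment and let $k$ be a positive integer. Let $u_1$, $N_1$, $Q_1$ and the extension of $G$ to the leaves $q_1$ and $v_1$ be as in the context. Then $N$ admits a $(G,k)$-gene labelling if and only if each of $N_1$ and $Q_1$ admits a $(G,k)$-gene labelling (with respect to the extended genome assignment on their respective leaf sets).
   Context: A digraph is rooted if it has a vertex $\rho$ of indegree zero such that every vertex is reachable from $\rho$ by a directed path. A phylogenetic network on $\mathcal{X}$ is a rooted acyclic digraph whose root has outdegree at least two, in which every vertex $v$ of outdegree $1$ has indegree at least $2$, and whose set of outdegree-zero vertices (leaves) is $\mathcal{X}$. A galled tree is a phylogenetic network in which any two distinct cycles of the underlying undirected graph have disjoint vertex sets (each such cycle is a gall). A genome assignment is any map from the leaf set to $2^{\mathcal{G}}$. A $(G,k)$-gene labelling of a network $M=(V,A)$ with leaf set $L$ is a map $F:V\to 2^{\mathcal{G}}$ with (I) $F(x)=G(x)$ for all $x\in L$; (II) $|F(v)|\le k$ for all $v\in V$; (III) for each $g\in\mathcal{G}$, the sub-digraph induced by $\{v\in V: g\in F(v)\}$ is rooted. Construction: $u_1$ is a vertex of $N$ such that, for some gall, every vertex of that gall is a descendant of $u_1$ (reachable from $u_1$ by a directed path), and no proper descendant of $u_1$ has this property. $N_1$ is obtained from $N$ by replacing $u_1$ together with all its descendants by a single new leaf $q_1$. $Q_1$ is obtained from $N$ by deleting all vertices that are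 not descendants of $u_1$ and adding a new root $r_1$ with exactly two children, $u_1$ and a new leaf $v_1$. Let $L_{Q_1}$ be the leaf set of $Q_1$, and set $G(q_1)=G(v_1)=\big(\bigcup_{x\in L_{Q_1}\setminus\{v_1\}}G(x)\big)\cap\big(\bigcup_{x\in\mathcal{X}\setminus L_{Q_1}}G(x)\big)$. *)

theory Defs
  imports Main
begin

definition indeg :: "('v \<times> 'v) set \<Rightarrow> 'v \<Rightarrow> nat" where
  "indeg A v = card {u. (u, v) \<in> A}"

definition outdeg :: "('v \<times> 'v) set \<Rightarrow> 'v \<Rightarrow> nat" where
  "outdeg A v = card {w. (v, w) \<in> A}"

definition digraph :: "'v set \<Rightarrow> ('v \<times> 'v) set \<Rightarrow> bool" where
  "digraph V A \<longleftrightarrow> finite V \<and> A \<subseteq> V \<times> V"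

definition rooted :: "'v set \<Rightarrow> ('v \<times> 'v) set \<Rightarrow> bool" where
  "rooted V A \<longleftrightarrow> A \<subseteq> V \<times> V \<and>
     (\<exists>\<rho>\<in>V. indeg A \<rho> = 0 \<and> (\<forall>v\<in>V. (\<rho>, v) \<in> A\<^sup>*))"

definition leaves :: "'v set \<Rightarrow> ('v \<times> 'v) set \<Rightarrow> 'v set" where
  "leaves V A = {v \<in> V. outdeg A v = 0}"

definition phylo_network :: "'v set \<Rightarrow> ('v \<times> 'v) set \<Rightarrow> 'v set \<Rightarrow> bool" where
  "phylo_network V A X \<longleftrightarrow> digraph V A \<and> rooted V A \<and> acyclic A \<and>
     (\<forall>\<rho>\<in>V. indeg A \<rho> = 0 \<longrightarrow> outdeg A \<rho> \<ge> 2) \<and>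
     (\<forall>v\<in>V. outdeg A v = 1 \<longrightarrow> indeg A v \<ge> 2) \<and>
     X = leaves V A"

definition uadj :: "('v \<times> 'v) set \<Rightarrow> 'v \<Rightarrow> 'v \<Rightarrow> bool" where
  "uadj A x y \<longleftrightarrow> (x, y) \<in> A \<or> (y, x) \<in> A"

definition ucycle :: "('v \<times> 'v) set \<Rightarrow> 'v list \<Rightarrow> bool" where
  "ucycle A c \<longleftrightarrow> length c \<ge> 3 \<and> distinct c \<and>
     (\<forall>i < length c. uadj A (c ! i) (c ! ((i + 1) mod length c)))"

text \<open>The (undirected) edge set of a cycle; two cycles are the same cycle iff equal edge sets.\<close>
definition cycle_edges :: "'v list \<Rightarrow> 'v set set" where
  "cycle_edges c = {{c ! i, c ! ((i + 1) mod length c)} | i. i < length c}"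

definition galled_tree :: "'v set \<Rightarrow> ('v \<times> 'v) set \<Rightarrow> 'v set \<Rightarrow> bool" where
  "galled_tree V A X \<longleftrightarrow> phylo_network V A X \<and>
     (\<forall>c d. ucycle A c \<longrightarrow> ucycle A d \<longrightarrow> cycle_edges c \<noteq> cycle_edges d \<longrightarrow>
        set c \<inter> set d = {})"

definition two_galls :: "('v \<times> 'v) set \<Rightarrow> bool" where
  "two_galls A \<longleftrightarrow> (\<exists>c d. ucycle A c \<and> ucycle A d \<and> cycle_edges c \<noteq> cycle_edges d)"

definition desc :: "('v \<times> 'v) set \<Rightarrow> 'v \<Rightarrow> 'v set" where
  "desc A u = {w. (u, w) \<in> A\<^sup>*}"

definition covers_gall :: "('v \<times> 'v) set \<Rightarrow> 'v \<Rightarrow> bool" where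
  "covers_gall A u \<longleftrightarrow> (\<exists>c. ucycle A c \<and> set c \<subseteq> desc A u)"

definition lowest_gall_vertex :: "'v set \<Rightarrow> ('v \<times> 'v) set \<Rightarrow> 'v \<Rightarrow> bool" where
  "lowest_gall_vertex V A u \<longleftrightarrow> u \<in> V \<and> covers_gall A u \<and>
     (\<forall>w \<in> desc A u. w \<noteq> u \<longrightarrow> \<not> covers_gall A w)"

definition N1_verts :: "'v set \<Rightarrow> ('v \<times> 'v) set \<Rightarrow> 'v \<Rightarrow> 'v \<Rightarrow> 'v set" where
  "N1_verts V A u q = (V - desc A u) \<union> {q}"

definition N1_arcs :: "'v set \<Rightarrow> ('v \<times> 'v) set \<Rightarrow> 'v \<Rightarrow> 'v \<Rightarrow> ('v \<times> 'v) set" where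
  "N1_arcs V A u q = (A \<inter> ((V - desc A u) \<times> (V - desc A u))) \<union>
     {(p, q) | p. p \<in> V - desc A u \<and> (\<exists>d \<in> desc A u. (p, d) \<in> A)}"

definition Q1_verts :: "('v \<times> 'v) set \<Rightarrow> 'v \<Rightarrow> 'v \<Rightarrow> 'v \<Rightarrow> 'v set" where
  "Q1_verts A u r v = desc A u \<union> {r, v}"

definition Q1_arcs :: "('v \<times> 'v) set \<Rightarrow> 'v \<Rightarrow> 'v \<Rightarrow> 'v \<Rightarrow> ('v \<times> 'v) set" where
  "Q1_arcs A u r v = (A \<inter> (desc A u \<times> desc A u)) \<union> {(r, u), (r, v)}"

text \<open>(G,k)-gene labelling with gene set Gs. Condition (III) is required for every gene
  that actually occurs in the labelling.\<close>
definition gene_labelling ::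
  "'v set \<Rightarrow> ('v \<times> 'v) set \<Rightarrow> 'g set \<Rightarrow> ('v \<Rightarrow> 'g set) \<Rightarrow> nat \<Rightarrow> ('v \<Rightarrow> 'g set) \<Rightarrow> bool" where
  "gene_labelling V A Gs G k F \<longleftrightarrow>
     (\<forall>v\<in>V. F v \<subseteq> Gs) \<and>
     (\<forall>x\<in>leaves V A. F x = G x) \<and>
     (\<forall>v\<in>V. card (F v) \<le> k) \<and>
     (\<forall>g\<in>Gs. {v\<in>V. g \<in> F v} \<noteq> {} \<longrightarrow>
        rooted {v\<in>V. g \<in> F v} (A \<inter> ({v\<in>V. g \<in> F v} \<times> {v\<in>V. g \<in> F v})))"

definition admits_labelling ::
  "'v set \<Rightarrow> ('v \<times> 'v) set \<Rightarrow> 'g set \<Rightarrow> ('v \<Rightarrow> 'g set) \<Rightarrow> nat \<Rightarrow> bool" where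
  "admits_labelling V A Gs G k \<longleftrightarrow> (\<exists>F. gene_labelling V A Gs G k F)"

end

theory Submission
  imports Defs
begin



definition dpath :: "('v \<times> 'v) set \<Rightarrow> 'v list \<Rightarrow> bool" where
  "dpath A xs \<longleftrightarrow> successively (\<lambda>x y. (x,y) \<in> A) xs"

lemma dpath_nth: "dpath A xs \<Longrightarrow> Suc i < length xs \<Longrightarrow> (xs!i, xs!Suc i) \<in> A"
  unfolding dpath_def using successively_nth by fast

lemma dpath_trancl: "dpath A xs \<Longrightarrow> i < j \<Longrightarrow> j < length xs \<Longrightarrow> (xs!i, xs!j) \<in> A\<^sup>+"
proof (induction j)
  case 0 then show ?case by simp
next
  case (Suc j)
  have a: "(xs!j, xs!Suc j) \<in> A" using Suc.prems dpath_nth by blast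
  show ?case
  proof (cases "i = j")
    case True then show ?thesis using a by auto
  next
    case False then have "(xs!i, xs!j) \<in> A\<^sup>+" using Suc by auto
    then show ?thesis using a by auto
  qed
qed

lemma dpath_rtrancl: "dpath A xs \<Longrightarrow> i \<le> j \<Longrightarrow> j < length xs \<Longrightarrow> (xs!i, xs!j) \<in> A\<^sup>*"
  by (metis dpath_trancl le_neq_implies_less rtrancl.rtrancl_refl trancl_into_rtrancl)

lemma dpath_distinct: "acyclic A \<Longrightarrow> dpath A xs \<Longrightarrow> distinct xs"
  unfolding distinct_conv_nth
proof (intro allI impI)
  fix i j assume ac: "acyclic A" and d: "dpath A xs" and ij: "i < length xs" "j < length xs" "i \<noteq> j"
  show "xs!i \<noteq> xs!j"
  proof (cases "i < j")
    case True then show ?thesis using dpath_trancl[OF d True ij(2)] ac unfolding acyclic_def by auto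
  next
    case False then have "j < i" using ij by auto
    then show ?thesis using dpath_trancl[OF d \<open>j<i\<close> ij(1)] ac unfolding acyclic_def by auto
  qed
qed

lemma dpath_set: "dpath A xs \<Longrightarrow> z \<in> set xs \<Longrightarrow> (hd xs, z) \<in> A\<^sup>* \<and> (z, last xs) \<in> A\<^sup>*"
proof -
  assume d: "dpath A xs" and z: "z \<in> set xs"
  then obtain i where i: "i < length xs" "z = xs!i" by (auto simp: in_set_conv_nth)
  have ne: "xs \<noteq> []" using z by auto
  have "(xs!0, xs!i) \<in> A\<^sup>*" using dpath_rtrancl[OF d, of 0 i] i by auto
  moreover have "(xs!i, xs!(length xs - 1)) \<in> A\<^sup>*" using dpath_rtrancl[OF d, of i "length xs - 1"] i by auto
  ultimately show ?thesis using i ne by (simp add: hd_conv_nth last_conv_nth)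
qed

lemma rtrancl_dpath: "(x,y) \<in> A\<^sup>* \<Longrightarrow> \<exists>xs. dpath A xs \<and> xs \<noteq> [] \<and> hd xs = x \<and> last xs = y"
proof (induction rule: rtrancl_induct)
  case base then show ?case by (intro exI[of _ "[x]"]) (auto simp: dpath_def)
next
  case (step y z)
  then obtain xs where xs: "dpath A xs" "xs \<noteq> []" "hd xs = x" "last xs = y" by blast
  then show ?case using step(2)
    by (intro exI[of _ "xs @ [z]"]) (auto simp: dpath_def successively_append_iff)
qed

lemma dpath_append: "dpath A (xs @ ys) \<Longrightarrow> dpath A xs \<and> dpath A ys"
  by (simp add: dpath_def successively_append_iff)

lemma first_in:
  "xs \<noteq> [] \<Longrightarrow> last xs \<in> C \<Longrightarrow> \<exists>ys zs. xs = ys @ zs \<and> ys \<noteq> [] \<and> last ys \<in> C \<and> (\<forall>z\<in>set (butlast ys). z \<notin> C)"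
proof (induction xs)
  case Nil then show ?case by simp
next
  case (Cons a xs)
  show ?case
  proof (cases "a \<in> C")
    case True then show ?thesis by (intro exI[of _ "[a]"] exI[of _ xs]) auto
  next
    case False
    then have "xs \<noteq> []" using Cons.prems by auto
    then obtain ys zs where "xs = ys @ zs" "ys \<noteq> []" "last ys \<in> C" "\<forall>z\<in>set (butlast ys). z \<notin> C"
      using Cons by auto
    then show ?thesis using False by (intro exI[of _ "a # ys"] exI[of _ zs]) auto
  qed
qed

lemma ucycle_intro:
  assumes "successively (uadj A) xs" "uadj A (last xs) (hd xs)" "distinct xs" "length xs \<ge> 3"
  shows "ucycle A xs"
  unfolding ucycle_def
proof (intro conjI allI impI)
  fix i assume i: "i < length xs"
  show "uadj A (xs ! i) (xs ! ((i + 1) mod length xs))"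
  proof (cases "Suc i < length xs")
    case True then show ?thesis using assms(1) successively_nth by fastforce
  next
    case False then have "i = length xs - 1" using i by auto
    moreover have "Suc (length xs - 1) mod length xs = 0"
    proof - have "Suc (length xs - 1) = length xs" using assms(4) by simp then show ?thesis by simp qed
    moreover have "xs \<noteq> []" using assms(4) by auto
    ultimately show ?thesis using assms(2,4) by (simp add: hd_conv_nth last_conv_nth)
  qed
qed (use assms in auto)

lemma ucycle_succ: "ucycle A xs \<Longrightarrow> successively (uadj A) xs \<and> uadj A (last xs) (hd xs)"
proof -
  assume u: "ucycle A xs"
  then have l: "length xs \<ge> 3" and ad: "\<forall>i < length xs. uadj A (xs ! i) (xs ! ((i + 1) mod length xs))"
    by (auto simp: ucycle_def)
  have "successively (uadj A) xs" unfolding successively_conv_nth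
  proof (intro allI impI)
    fix i assume "Suc i < length xs" then show "uadj A (xs ! i) (xs ! Suc i)" using ad[rule_format, of i] by auto
  qed
  moreover have "Suc (length xs - 1) mod length xs = 0"
    proof - have "Suc (length xs - 1) = length xs" using l by simp then show ?thesis by simp qed
  moreover have "xs \<noteq> []" using l by auto
  moreover have "uadj A (last xs) (hd xs)" using ad[rule_format, of "length xs - 1"] l calculation(2,3)
    by (simp add: hd_conv_nth last_conv_nth)
  ultimately show ?thesis by auto
qed

lemma ucycle_rotate: "ucycle A xs \<Longrightarrow> ucycle A (rotate n xs)"
  unfolding ucycle_def
proof (intro conjI allI impI)
  fix i assume u: "3 \<le> length xs \<and> distinct xs \<and> (\<forall>i<length xs. uadj A (xs ! i) (xs ! ((i + 1) mod length xs)))"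
    and i: "i < length (rotate n xs)"
  let ?L = "length xs"
  have L: "?L > 0" using u by auto
  have "rotate n xs ! i = xs ! ((n + i) mod ?L)" using i by (simp add: nth_rotate)
  moreover have "rotate n xs ! ((i + 1) mod ?L) = xs ! ((n + (i+1) mod ?L) mod ?L)"
    using L by (simp add: nth_rotate)
  moreover have "(n + (i+1) mod ?L) mod ?L = ((n + i) mod ?L + 1) mod ?L"
    by (simp add: mod_add_right_eq mod_Suc_eq)
  moreover have "uadj A (xs ! ((n + i) mod ?L)) (xs ! (((n + i) mod ?L + 1) mod ?L))"
    using u L by auto
  ultimately show "uadj A (rotate n xs ! i) (rotate n xs ! ((i + 1) mod length (rotate n xs)))" by simp
qed auto

lemma edge_in: "Suc i < length xs \<Longrightarrow> {xs!i, xs!Suc i} \<in> cycle_edges xs"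
  unfolding cycle_edges_def by (rule CollectI, rule exI[of _ i]) auto

lemma edges_sub: "e \<in> cycle_edges c \<Longrightarrow> e \<subseteq> set c"
proof -
  assume "e \<in> cycle_edges c"
  then obtain i where i: "i < length c" "e = {c ! i, c ! ((i + 1) mod length c)}" unfolding cycle_edges_def by blast
  then have "(i+1) mod length c < length c" by (intro mod_less_divisor) auto
  then show ?thesis using i by (auto intro!: nth_mem)
qed

lemma uadj_sym: "uadj A x y = uadj A y x" by (auto simp: uadj_def)

lemma dpath_uadj: "dpath A xs \<Longrightarrow> successively (uadj A) xs"
  unfolding dpath_def by (erule successively_mono) (auto simp: uadj_def)

lemma succ_rev_uadj: "successively (uadj A) xs \<Longrightarrow> successively (uadj A) (rev xs)"
  by (simp add: uadj_sym)




lemma len2: "xs \<noteq> [] \<Longrightarrow> hd xs \<noteq> last xs \<Longrightarrow> length xs \<ge> 2"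
  by (cases xs; cases "tl xs") auto

lemma dpath_last_arc: "dpath A (xs @ [u]) \<Longrightarrow> xs \<noteq> [] \<Longrightarrow> (last xs, u) \<in> A"
  by (simp add: dpath_def successively_append_iff)

lemma succ3: "successively P xs \<Longrightarrow> successively P ys \<Longrightarrow> successively P zs \<Longrightarrow>
  (xs \<noteq> [] \<Longrightarrow> P (last xs) (hd ys)) \<Longrightarrow> (zs \<noteq> [] \<Longrightarrow> P (last ys) (hd zs)) \<Longrightarrow> ys \<noteq> [] \<Longrightarrow>
  successively P (xs @ ys @ zs)"
  by (auto simp: successively_append_iff)

lemma K_core:
  assumes ac: "acyclic A"
   and galled: "\<forall>c d. ucycle A c \<longrightarrow> ucycle A d \<longrightarrow> cycle_edges c \<noteq> cycle_edges d \<longrightarrow> set c \<inter> set d = {}"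
   and C: "ucycle A C" "u \<in> set C" "set C \<subseteq> desc A u"
   and rp: "(\<rho>,p) \<in> A\<^sup>*" and ru: "(\<rho>,u) \<in> A\<^sup>*"
   and pw: "(p,w) \<in> A" "p \<notin> desc A u" "w \<in> desc A u"
  shows "w = u"
proof (rule ccontr)
  assume wu: "w \<noteq> u"
  obtain \<pi> where pi: "dpath A \<pi>" "\<pi> \<noteq> []" "hd \<pi> = u" "last \<pi> = w"
    using rtrancl_dpath[of u w A] pw(3) unfolding desc_def by blast
  have pidesc: "set \<pi> \<subseteq> desc A u" using dpath_set[OF pi(1)] pi(3) unfolding desc_def by auto
  have pilen: "length \<pi> \<ge> 2" using len2[OF pi(2)] pi(3,4) wu by simp
  obtain P where P: "dpath A P" "P \<noteq> []" "hd P = \<rho>" "last P = p" using rtrancl_dpath[OF rp] by blast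
  obtain Q where Q: "dpath A Q" "Q \<noteq> []" "hd Q = \<rho>" "last Q = u" using rtrancl_dpath[OF ru] by blast
  have uP: "u \<notin> set P"
  proof
    assume "u \<in> set P"
    then have "(u, p) \<in> A\<^sup>*" using dpath_set[OF P(1)] P(4) by auto
    then show False using pw(2) unfolding desc_def by auto
  qed
  have "\<rho> \<in> set P" using hd_in_set[OF P(2)] P(3) by simp
  then have "rev Q \<noteq> []" "last (rev Q) \<in> set P" using Q by (auto simp: last_rev)
  from first_in[OF this] obtain ys zs where ys: "rev Q = ys @ zs" "ys \<noteq> []" "last ys \<in> set P"
    "\<forall>z\<in>set (butlast ys). z \<notin> set P" by blast
  define a where "a = last ys"
  have Qeq: "Q = rev zs @ rev ys" using ys(1) by (metis rev_append rev_rev_ident)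
  have dQ': "dpath A (rev ys)" using dpath_append Q(1) Qeq by metis
  have hdys: "hd ys = u" using ys(1,2) Q(2,4) by (metis hd_append2 hd_rev)
  have aP: "a \<in> set P" using ys a_def by auto
  then have au: "a \<noteq> u" using uP by auto
  define B where "B = rev (butlast ys)"
  have ys_split: "ys = butlast ys @ [a]" using ys(2) a_def by simp
  have Bne: "B \<noteq> []" using ys_split hdys au B_def by (metis append_Nil list.sel(1) rev_is_Nil_conv)
  have lastB: "last B = u" using B_def Bne hdys ys_split
    by (metis hd_append2 last_rev rev_is_Nil_conv)
  define Q3 where "Q3 = butlast B"
  have revys: "rev ys = a # Q3 @ [u]"
  proof -
    have "rev ys = a # B" using ys_split B_def by (metis rev.simps(2) rev_append rev_rev_ident rev_singleton_conv append_Cons append_Nil)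
    moreover have "B = Q3 @ [u]" using append_butlast_last_id[OF Bne] lastB Q3_def by simp
    ultimately show ?thesis by simp
  qed
  have Q3P: "\<forall>z\<in>set Q3. z \<notin> set P" 
  proof -
    have "set Q3 \<subseteq> set B" unfolding Q3_def by (auto dest: in_set_butlastD)
    then show ?thesis using ys(4) B_def by auto
  qed
  obtain P1 P2 where Psplit: "P = P1 @ a # P2" using split_list[OF aP] by blast
  have dP': "dpath A (a # P2)" using P(1) Psplit dpath_append by metis
  have lastP': "last (a # P2) = p" using P(4) Psplit by simp
  define D where "D = \<pi> @ rev (a # P2) @ Q3"
  have dQ3: "dpath A (a # Q3 @ [u])" using dQ' revys by simp
  have dq3: "dpath A Q3" using dQ3 by (metis append_Cons append_Nil dpath_append)
  have s1: "successively (uadj A) \<pi>" using dpath_uadj[OF pi(1)] .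
  have s2: "successively (uadj A) (rev (a # P2))" using succ_rev_uadj[OF dpath_uadj[OF dP']] .
  have s3: "successively (uadj A) Q3" using dpath_uadj[OF dq3] .
  have j1: "uadj A (last \<pi>) (hd (rev (a # P2)))" 
  proof -
    have "hd (rev (a # P2)) = p" using lastP' by (simp only: hd_rev)
    then show ?thesis using pi(4) pw(1) by (simp add: uadj_def)
  qed
  have j2: "Q3 \<noteq> [] \<Longrightarrow> uadj A (last (rev (a # P2))) (hd Q3)"
    using dQ3 by (cases Q3) (auto simp: dpath_def uadj_def)
  have sD: "successively (uadj A) D" unfolding D_def
    using succ3[OF s1 s2 s3 j1 j2] by simp
  have closeD: "uadj A (last D) (hd D)"
  proof -
    have "(last (a # Q3), u) \<in> A" using dpath_last_arc[of A "a # Q3" u] dQ3 by simp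
    moreover have "last D = last (a # Q3)" unfolding D_def by (cases "Q3 = []") auto
    moreover have "hd D = u" unfolding D_def using pi by simp
    ultimately show ?thesis by (simp add: uadj_def)
  qed
  have distP: "distinct P" using dpath_distinct[OF ac P(1)] .
  have dist1: "distinct \<pi>" using dpath_distinct[OF ac pi(1)] .
  have dist2: "distinct (a # P2)" using distP Psplit by simp
  have dist3': "distinct (a # Q3 @ [u])" using dpath_distinct[OF ac dQ3] .
  have P2desc: "set (a # P2) \<inter> desc A u = {}"
  proof (rule ccontr)
    assume "set (a # P2) \<inter> desc A u \<noteq> {}"
    then obtain z where z: "z \<in> set (a # P2)" "z \<in> desc A u" by blast
    then have "(z, p) \<in> A\<^sup>*" using dpath_set[OF dP' z(1)] lastP' by simp
    then show False using z(2) pw(2) unfolding desc_def by (meson mem_Collect_eq rtrancl_trans)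
  qed
  have Q3desc: "set Q3 \<inter> desc A u = {}"
  proof (rule ccontr)
    assume "set Q3 \<inter> desc A u \<noteq> {}"
    then obtain z where z: "z \<in> set Q3" "z \<in> desc A u" by blast
    then have "(z, u) \<in> A\<^sup>*" using dpath_set[OF dQ3, of z] by simp
    moreover have "z \<noteq> u" using dist3' z(1) by auto
    ultimately have "(z, u) \<in> A\<^sup>+" by (meson rtranclD)
    moreover have "(u, z) \<in> A\<^sup>*" using z(2) unfolding desc_def by simp
    ultimately have "(u,u) \<in> A\<^sup>+" by simp
    then show False using ac unfolding acyclic_def by auto
  qed
  have distD: "distinct D" unfolding D_def using dist1 dist2 dist3' pidesc P2desc Q3desc Q3P Psplit
    by auto
  have lenD: "length D \<ge> 3" unfolding D_def using pilen by simp
  have cD: "ucycle A D" using ucycle_intro[OF sD closeD distD lenD] .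
  have "D ! (length \<pi> - 1) = w" unfolding D_def using pi pilen by (simp add: nth_append last_conv_nth)
  moreover have "D ! Suc (length \<pi> - 1) = p"
  proof -
    have e: "Suc (length \<pi> - 1) = length \<pi>" using pilen by simp
    have "hd (rev (a # P2)) = p" using lastP' by (simp only: hd_rev)
    then have "(rev (a # P2) @ Q3) ! 0 = p" by (metis Nil_is_append_conv hd_append2 hd_conv_nth list.distinct(1) rev_is_Nil_conv)
    then show ?thesis unfolding D_def e by (simp add: nth_append)
  qed
  moreover have "Suc (length \<pi> - 1) < length D" unfolding D_def using pilen by simp
  ultimately have "{w, p} \<in> cycle_edges D" using edge_in by metis
  moreover have "p \<notin> set C" using C(3) pw(2) by auto
  ultimately have "cycle_edges D \<noteq> cycle_edges C" using edges_sub by blast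
  then have "set D \<inter> set C = {}" using galled cD C(1) by blast
  moreover have "u \<in> set D" unfolding D_def using hd_in_set[OF pi(2)] pi(3) by simp
  ultimately show False using C(2) by blast
qed




lemma take_nth_notin: "distinct xs \<Longrightarrow> n < length xs \<Longrightarrow> xs!n \<notin> set (take n xs)"
  by (auto simp: in_set_conv_nth nth_eq_iff_index_eq)

lemma succ_take: "successively P xs \<Longrightarrow> successively P (take n xs)"
  by (metis append_take_drop_id successively_append_iff)

lemma T_core:
  assumes ac: "acyclic A"
   and galled: "\<forall>c d. ucycle A c \<longrightarrow> ucycle A d \<longrightarrow> cycle_edges c \<noteq> cycle_edges d \<longrightarrow> set c \<inter> set d = {}"
   and C: "ucycle A C" "set C \<subseteq> desc A u"
   and low: "\<forall>w\<in>desc A u. w \<noteq> u \<longrightarrow> \<not> covers_gall A w"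
  shows "u \<in> set C"
proof (rule ccontr)
  assume uC: "u \<notin> set C"
  have Cne: "C \<noteq> []" using C(1) by (auto simp: ucycle_def)
  have "(u, hd C) \<in> A\<^sup>*" using C(2) hd_in_set[OF Cne] unfolding desc_def by auto
  then obtain L0 where L0: "dpath A L0" "L0 \<noteq> []" "hd L0 = u" "last L0 = hd C"
    using rtrancl_dpath[of u "hd C" A] by blast
  have "last L0 \<in> set C" using L0(4) hd_in_set[OF Cne] by simp
  from first_in[OF L0(2) this] obtain \<pi>1 rr where p1: "L0 = \<pi>1 @ rr" "\<pi>1 \<noteq> []" "last \<pi>1 \<in> set C"
    "\<forall>z\<in>set (butlast \<pi>1). z \<notin> set C" by blast
  have dp1: "dpath A \<pi>1" using L0(1) p1(1) dpath_append by blast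
  have hp1: "hd \<pi>1 = u" using L0(3) p1(1,2) by simp
  define x where "x = last \<pi>1"
  have xC: "x \<in> set C" using p1(3) x_def by simp
  have xu: "x \<noteq> u" using xC uC by auto
  have l1: "length \<pi>1 \<ge> 2" using len2[OF p1(2)] hp1 x_def xu by simp
  obtain t1 where t1: "\<pi>1 = u # t1" using p1(2) hp1 by (cases \<pi>1) auto
  have t1ne: "t1 \<noteq> []" using l1 t1 by auto
  define h where "h = hd t1"
  have uh: "(u,h) \<in> A" using dp1 t1 t1ne h_def by (cases t1) (auto simp: dpath_def)
  have dt1: "dpath A t1" using dp1 t1 by (auto simp: dpath_def successively_Cons)
  have hu: "h \<noteq> u" using uh ac unfolding acyclic_def by auto
  have hdesc: "h \<in> desc A u" using uh unfolding desc_def by auto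
  have "\<not> covers_gall A h" using low hdesc hu by blast
  then obtain c' where c': "c' \<in> set C" "c' \<notin> desc A h" unfolding covers_gall_def using C(1) by blast
  have "(u, c') \<in> A\<^sup>*" using C(2) c'(1) unfolding desc_def by auto
  then obtain L where L: "dpath A L" "L \<noteq> []" "hd L = u" "last L = c'"
    using rtrancl_dpath[of u c' A] by blast
  have "last L \<in> set C" using L(4) c'(1) by simp
  from first_in[OF L(2) this] obtain \<pi>2 rr2 where p2: "L = \<pi>2 @ rr2" "\<pi>2 \<noteq> []" "last \<pi>2 \<in> set C"
    "\<forall>z\<in>set (butlast \<pi>2). z \<notin> set C" by blast
  have dp2: "dpath A \<pi>2" using L(1) p2(1) dpath_append by blast
  have hp2: "hd \<pi>2 = u" using L(3) p2(1,2) by simp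
  define y where "y = last \<pi>2"
  have yC: "y \<in> set C" using p2(3) y_def by simp
  have p2anc: "\<forall>z\<in>set \<pi>2. (z, c') \<in> A\<^sup>*" using dpath_set[OF L(1)] L(4) p2(1) by auto
  have p2nd: "set \<pi>2 \<inter> desc A h = {}"
  proof (rule ccontr)
    assume "set \<pi>2 \<inter> desc A h \<noteq> {}"
    then obtain z where "z \<in> set \<pi>2" "(h, z) \<in> A\<^sup>*" unfolding desc_def by blast
    then have "(h, c') \<in> A\<^sup>*" using p2anc by (meson rtrancl_trans)
    then show False using c'(2) unfolding desc_def by auto
  qed
  have tl1: "set t1 \<subseteq> desc A h" using dpath_set[OF dt1] h_def unfolding desc_def by auto
  have xt1: "x \<in> set t1" using x_def t1 t1ne by simp
  have yu: "y \<noteq> u" using yC uC by auto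
  have l2: "length \<pi>2 \<ge> 2" using len2[OF p2(2)] hp2 y_def yu by simp
  obtain t2 where t2: "\<pi>2 = u # t2" using p2(2) hp2 by (cases \<pi>2) auto
  have t2ne: "t2 \<noteq> []" using l2 t2 by auto
  have dt2: "dpath A t2" using dp2 t2 by (auto simp: dpath_def successively_Cons)
  have ut2: "(u, hd t2) \<in> A" using dp2 t2 t2ne by (cases t2) (auto simp: dpath_def)
  have yt2: "last t2 = y" using y_def t2 t2ne by simp
  have "y \<in> set \<pi>2" using y_def p2(2) by simp
  then have xy: "x \<noteq> y" using xt1 tl1 p2nd by auto
  obtain i where i: "i < length C" "C ! i = x" using xC by (auto simp: in_set_conv_nth)
  define C' where "C' = rotate i C"
  have cC': "ucycle A C'" using ucycle_rotate[OF C(1)] C'_def by simp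
  have lenC': "length C' = length C" "length C \<ge> 3" using C(1) C'_def by (auto simp: ucycle_def)
  have C'0: "C' ! 0 = x" using i C'_def nth_rotate[of 0 C i] Cne by simp
  have distC': "distinct C'" using C(1) C'_def by (simp add: ucycle_def)
  have setC': "set C' = set C" using C'_def by simp
  have "y \<in> set C'" using yC setC' by simp
  then obtain j where j: "j < length C'" "C' ! j = y" by (auto simp: in_set_conv_nth)
  have j0: "j \<noteq> 0" using j C'0 xy by (metis)
  define M where "M = tl C'"
  have C'M: "C' = x # M" using C'0 lenC' M_def by (cases C') auto
  have jM: "j - 1 < length M" "M ! (j - 1) = y" using j j0 C'M by (auto simp: nth_Cons split: nat.splits)
  define seg where "seg = take (j - 1) M"
  define \<pi> where "\<pi> = rev \<pi>1 @ t2"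
  define D where "D = rev \<pi>1 @ t2 @ rev seg"
  have sC': "successively (uadj A) C'" using ucycle_succ[OF cC'] by simp
  have sM: "successively (uadj A) M" using sC' C'M by (auto simp: successively_Cons)
  have sseg: "successively (uadj A) (rev seg)" using succ_rev_uadj[OF succ_take[OF sM]] seg_def by simp
  have s1: "successively (uadj A) (rev \<pi>1)" using succ_rev_uadj[OF dpath_uadj[OF dp1]] .
  have s2: "successively (uadj A) t2" using dpath_uadj[OF dt2] .
  have j1: "uadj A (last (rev \<pi>1)) (hd t2)" using ut2 hp1 by (simp add: last_rev uadj_def)
  have j2: "seg \<noteq> [] \<Longrightarrow> uadj A (last t2) (hd (rev seg))"
  proof -
    assume sn: "seg \<noteq> []"
    then have j2': "j \<ge> 2" using seg_def by (cases "j - 1") auto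
    have "hd (rev seg) = M ! (j - 2)" using sn seg_def j2' jM by (simp add: hd_rev last_conv_nth numeral_2_eq_2)
    moreover have "uadj A (M ! (j - 2)) (M ! Suc (j - 2))" using successively_nth[OF sM, of "j-2"] jM j2' by simp
    moreover have "Suc (j - 2) = j - 1" using j2' by simp
    ultimately show ?thesis using yt2 jM uadj_sym by metis
  qed
  have sD: "successively (uadj A) D" unfolding D_def using succ3[OF s1 s2 sseg j1 j2 t2ne] by simp
  have C'1: "uadj A (C' ! 0) (C' ! 1)" using successively_nth[OF sC', of 0] lenC' by simp
  have lastD: "last D = C' ! 1"
  proof (cases "seg = []")
    case True
    then have "j = 1" using seg_def jM j0 by (cases "j - 1") auto
    then show ?thesis using True D_def yt2 j t2ne by simp
  next
    case False
    then have "last D = hd seg" unfolding D_def by (simp add: last_rev)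
    also have "\<dots> = M ! 0" using False seg_def by (simp add: hd_conv_nth)
    finally show ?thesis using C'M by simp
  qed
  have hdD: "hd D = x" unfolding D_def using x_def p1(2) by (simp add: hd_rev)
  have closeD: "uadj A (last D) (hd D)" using C'1 lastD hdD C'0 uadj_sym by metis
  have dist1: "distinct \<pi>1" using dpath_distinct[OF ac dp1] .
  have dist2: "distinct \<pi>2" using dpath_distinct[OF ac dp2] .
  have distseg: "distinct seg" using distC' C'M seg_def by simp
  have segC: "set seg \<subseteq> set C - {x, y}"
  proof -
    have "set seg \<subseteq> set M" using seg_def by (simp add: set_take_subset)
    moreover have "x \<notin> set M" using distC' C'M by simp
    moreover have "y \<notin> set seg" using take_nth_notin[of M "j-1"] distC' C'M jM seg_def by simp
    moreover have "set M \<subseteq> set C" using setC' C'M by auto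
    ultimately show ?thesis by auto
  qed
  have pi1C: "set \<pi>1 \<inter> set C \<subseteq> {x}"
  proof -
    have "\<pi>1 = butlast \<pi>1 @ [x]" using x_def p1(2) by simp
    then have "set \<pi>1 = set (butlast \<pi>1) \<union> {x}" by (metis set_append empty_set list.simps(15))
    then show ?thesis using p1(4) by auto
  qed
  have pi2C: "set \<pi>2 \<inter> set C \<subseteq> {y}"
  proof -
    have "\<pi>2 = butlast \<pi>2 @ [y]" using y_def p2(2) by simp
    then have "set \<pi>2 = set (butlast \<pi>2) \<union> {y}" by (metis set_append empty_set list.simps(15))
    then show ?thesis using p2(4) by auto
  qed
  have dt12: "set \<pi>1 \<inter> set t2 = {}"
  proof -
    have "set t2 \<inter> desc A h = {}" using p2nd t2 by auto
    moreover have "u \<notin> set t2" using dist2 t2 by simp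
    ultimately show ?thesis using tl1 t1 by auto
  qed
  have distD: "distinct D" unfolding D_def using dist1 dist2 t2 distseg segC pi1C pi2C dt12 by auto
  have lenD: "length D \<ge> 3" unfolding D_def using l1 t2ne by (cases t2) auto
  have cD: "ucycle A D" using ucycle_intro[OF sD closeD distD lenD] .
  have e0: "D ! (length \<pi>1 - 1) = u"
  proof -
    have "rev \<pi>1 ! (length \<pi>1 - 1) = \<pi>1 ! 0" using l1 by (simp add: rev_nth)
    then show ?thesis unfolding D_def using l1 hp1 p1(2) by (simp add: nth_append hd_conv_nth)
  qed
  have "Suc (length \<pi>1 - 1) < length D" unfolding D_def using l1 t2ne by (cases t2) auto
  then have "{u, D ! Suc (length \<pi>1 - 1)} \<in> cycle_edges D" using edge_in e0 by metis
  then have "cycle_edges D \<noteq> cycle_edges C" using edges_sub uC by blast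
  then have "set D \<inter> set C = {}" using galled cD C(1) by blast
  moreover have "x \<in> set D" using hdD D_def p1(2) by (metis hd_in_set Nil_is_append_conv rev_is_Nil_conv)
  ultimately show False using xC by blast
qed




lemma card0_iff_fin: "finite B \<Longrightarrow> card B = 0 \<longleftrightarrow> B = {}" by simp

lemma rooted_iff:
  assumes "finite W" "R \<subseteq> W \<times> W"
  shows "rooted W R \<longleftrightarrow> (\<exists>\<rho>\<in>W. (\<forall>x. (x,\<rho>) \<notin> R) \<and> (\<forall>v\<in>W. (\<rho>,v) \<in> R\<^sup>*))"
proof -
  have "\<And>\<rho>. finite {u. (u,\<rho>) \<in> R}"
    using assms by (metis (no_types, lifting) finite_subset mem_Collect_eq mem_Sigma_iff subsetD subsetI)
  then have "\<And>\<rho>. indeg R \<rho> = 0 \<longleftrightarrow> (\<forall>x. (x,\<rho>) \<notin> R)" unfolding indeg_def by simp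
  then show ?thesis unfolding rooted_def using assms(2) by auto
qed

lemma outdeg0_iff:
  assumes "finite W" "R \<subseteq> W \<times> W"
  shows "outdeg R v = 0 \<longleftrightarrow> (\<forall>w. (v,w) \<notin> R)"
proof -
  have "finite {w. (v,w) \<in> R}"
    using assms by (metis (no_types, lifting) finite_subset mem_Collect_eq mem_Sigma_iff subsetD subsetI)
  then show ?thesis unfolding outdeg_def by simp
qed

lemma restrict_back:
  assumes "(x,y) \<in> R\<^sup>*" "\<forall>z. (z,y) \<in> R\<^sup>* \<longrightarrow> z \<in> S"
  shows "(x,y) \<in> (R \<inter> S \<times> S)\<^sup>*"
  using assms
proof (induction rule: converse_rtrancl_induct)
  case base then show ?case by simp
next
  case (step x x')
  have "(x',y) \<in> (R \<inter> S \<times> S)\<^sup>*" using step by blast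
  moreover have "x \<in> S" "x' \<in> S" using step.prems step.hyps by (auto intro: converse_rtrancl_into_rtrancl)
  ultimately show ?case using step.hyps(1) by (meson IntI SigmaI converse_rtrancl_into_rtrancl)
qed

lemma restrict_fwd:
  assumes "(x,y) \<in> R\<^sup>*" "x \<in> S" "\<forall>a b. (a,b) \<in> R \<longrightarrow> a \<in> S \<longrightarrow> b \<in> S"
  shows "(x,y) \<in> (R \<inter> S \<times> S)\<^sup>*"
proof -
  have "(x,y) \<in> (R \<inter> S \<times> S)\<^sup>* \<and> y \<in> S" using assms(1)
  proof (induction rule: rtrancl_induct)
    case base then show ?case using assms(2) by simp
  next
    case (step y z)
    then have "z \<in> S" using assms(3) by blast
    then show ?case using step by (meson IntI SigmaI rtrancl.rtrancl_into_rtrancl)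
  qed
  then show ?thesis by simp
qed

lemma entry:
  assumes "(x,y) \<in> R\<^sup>*" "x \<notin> S" "y \<in> S"
  shows "\<exists>a b. (x,a) \<in> R\<^sup>* \<and> (a,b) \<in> R \<and> a \<notin> S \<and> b \<in> S \<and> (b,y) \<in> R\<^sup>*"
  using assms
proof (induction rule: rtrancl_induct)
  case base then show ?case by simp
next
  case (step y z)
  show ?case
  proof (cases "y \<in> S")
    case True
    then obtain a b where "(x,a) \<in> R\<^sup>*" "(a,b) \<in> R" "a \<notin> S" "b \<in> S" "(b,y) \<in> R\<^sup>*" using step by blast
    then show ?thesis using step.hyps(2) by (meson rtrancl.rtrancl_into_rtrancl)
  next
    case False then show ?thesis using step by blast
  qed
qed

locale sett =
  fixes V :: "'v set" and A :: "('v \<times> 'v) set" and X :: "'v set" and u1 q1 r1 v1 :: 'v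
  assumes finV: "finite V" and AV: "A \<subseteq> V \<times> V" and ac: "acyclic A"
    and XL: "X = leaves V A" and u1V: "u1 \<in> V"
    and K: "\<forall>p w. (p,w) \<in> A \<longrightarrow> p \<notin> desc A u1 \<longrightarrow> w \<in> desc A u1 \<longrightarrow> w = u1"
    and q1V: "q1 \<notin> V" and r1V: "r1 \<notin> V" and v1V: "v1 \<notin> V" and rv: "r1 \<noteq> v1"
begin

abbreviation "D \<equiv> desc A u1"
abbreviation "VN \<equiv> N1_verts V A u1 q1"
abbreviation "AN \<equiv> N1_arcs V A u1 q1"
abbreviation "VQ \<equiv> Q1_verts A u1 r1 v1"
abbreviation "AQ \<equiv> Q1_arcs A u1 r1 v1"

lemma u1D: "u1 \<in> D" unfolding desc_def by simp

lemma Dcl: "(a,b) \<in> A \<Longrightarrow> a \<in> D \<Longrightarrow> b \<in> D"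
  unfolding desc_def by (simp add: rtrancl_into_rtrancl)

lemma Dcl_star: "(a,b) \<in> A\<^sup>* \<Longrightarrow> a \<in> D \<Longrightarrow> b \<in> D"
  unfolding desc_def by (meson mem_Collect_eq rtrancl_trans)

lemma DV: "D \<subseteq> V"
proof
  fix z assume "z \<in> D"
  then have "(u1,z) \<in> A\<^sup>*" unfolding desc_def by simp
  then show "z \<in> V" using u1V AV by (induction rule: rtrancl_induct) auto
qed

lemma noback: "(a,u1) \<in> A \<Longrightarrow> a \<in> D \<Longrightarrow> False"
proof -
  assume "(a,u1) \<in> A" "a \<in> D"
  then have "(u1,u1) \<in> A\<^sup>+" unfolding desc_def by (simp add: rtrancl_into_trancl1)
  then show False using ac unfolding acyclic_def by auto
qed

lemma anc_notD: "(z,w) \<in> A\<^sup>* \<Longrightarrow> w \<notin> D \<Longrightarrow> z \<notin> D"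
  using Dcl_star by blast

lemma AN_char: "(a,b) \<in> AN \<longleftrightarrow> a \<in> V - D \<and> ((b \<in> V - D \<and> (a,b) \<in> A) \<or> (b = q1 \<and> (a,u1) \<in> A))"
proof
  assume "(a,b) \<in> AN"
  then show "a \<in> V - D \<and> ((b \<in> V - D \<and> (a,b) \<in> A) \<or> (b = q1 \<and> (a,u1) \<in> A))"
    unfolding N1_arcs_def using K by blast
next
  assume "a \<in> V - D \<and> ((b \<in> V - D \<and> (a,b) \<in> A) \<or> (b = q1 \<and> (a,u1) \<in> A))"
  then show "(a,b) \<in> AN" unfolding N1_arcs_def using u1D by blast
qed

lemma AQ_char: "(a,b) \<in> AQ \<longleftrightarrow> (a \<in> D \<and> (a,b) \<in> A) \<or> (a = r1 \<and> (b = u1 \<or> b = v1))"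
  unfolding Q1_arcs_def using Dcl by blast

lemma VN_eq: "VN = (V - D) \<union> {q1}" unfolding N1_verts_def by simp
lemma VQ_eq: "VQ = D \<union> {r1, v1}" unfolding Q1_verts_def by simp

lemma finVN: "finite VN" using finV unfolding N1_verts_def by simp
lemma finVQ: "finite VQ" using finV DV finite_subset unfolding Q1_verts_def by auto
lemma ANsub: "AN \<subseteq> VN \<times> VN" using AN_char VN_eq AV by auto
lemma AQsub: "AQ \<subseteq> VQ \<times> VQ" using AQ_char VQ_eq Dcl u1D by auto

lemma XV: "X \<subseteq> V" using XL unfolding leaves_def by auto

lemma X_iff: "x \<in> X \<longleftrightarrow> x \<in> V \<and> (\<forall>w. (x,w) \<notin> A)"
  using XL outdeg0_iff[OF finV AV] unfolding leaves_def by auto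

lemma noarcN: "v \<in> V - D \<Longrightarrow> (\<forall>w. (v,w) \<notin> AN) \<longleftrightarrow> (\<forall>w. (v,w) \<notin> A)"
proof
  assume v: "v \<in> V - D" and n: "\<forall>w. (v,w) \<notin> AN"
  show "\<forall>w. (v,w) \<notin> A"
  proof (intro allI notI)
    fix w assume a: "(v,w) \<in> A"
    show False
    proof (cases "w \<in> D")
      case True then have "w = u1" using K a v by blast
      then have "(v,q1) \<in> AN" using AN_char v a by blast
      then show False using n by blast
    next
      case False then have "(v,w) \<in> AN" using AN_char v a AV by blast
      then show False using n by blast
    qed
  qed
next
  assume "\<forall>w. (v,w) \<notin> A" then show "\<forall>w. (v,w) \<notin> AN" using AN_char by blast
qed

lemma leavesN1: "leaves VN AN = {q1} \<union> (X - D)"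
proof -
  have o: "\<And>v. outdeg AN v = 0 \<longleftrightarrow> (\<forall>w. (v,w) \<notin> AN)" using outdeg0_iff[OF finVN ANsub] .
  have q: "\<forall>w. (q1,w) \<notin> AN" using AN_char q1V by blast
  have "v \<in> leaves VN AN \<longleftrightarrow> v \<in> {q1} \<union> (X - D)" for v
  proof (cases "v = q1")
    case True then show ?thesis using q o q1V XV unfolding leaves_def VN_eq by auto
  next
    case False
    then have "v \<in> leaves VN AN \<longleftrightarrow> v \<in> V - D \<and> (\<forall>w. (v,w) \<notin> AN)" using o unfolding leaves_def VN_eq by auto
    also have "\<dots> \<longleftrightarrow> v \<in> V - D \<and> (\<forall>w. (v,w) \<notin> A)" using noarcN by blast
    also have "\<dots> \<longleftrightarrow> v \<in> X - D" using X_iff by auto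
    finally show ?thesis using False by simp
  qed
  then show ?thesis by blast
qed

lemma leavesQ1: "leaves VQ AQ = {v1} \<union> (X \<inter> D)"
proof -
  have "\<And>v. outdeg AQ v = 0 \<longleftrightarrow> (\<forall>w. (v,w) \<notin> AQ)" using outdeg0_iff[OF finVQ AQsub] .
  then show ?thesis unfolding leaves_def VQ_eq using AQ_char X_iff Dcl DV r1V v1V rv by auto
qed

end




definition Wset :: "'v set \<Rightarrow> ('v \<Rightarrow> 'g set) \<Rightarrow> 'g \<Rightarrow> 'v set" where
  "Wset U F g = {v\<in>U. g \<in> F v}"

lemma gl_iff: "gene_labelling V A Gs G k F \<longleftrightarrow>
     (\<forall>v\<in>V. F v \<subseteq> Gs) \<and>
     (\<forall>x\<in>leaves V A. F x = G x) \<and>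
     (\<forall>v\<in>V. card (F v) \<le> k) \<and>
     (\<forall>g\<in>Gs. Wset V F g \<noteq> {} \<longrightarrow> rooted (Wset V F g) (A \<inter> (Wset V F g \<times> Wset V F g)))"
  unfolding gene_labelling_def Wset_def by simp

lemma anc_in: "(z,w) \<in> (A \<inter> W \<times> W)\<^sup>* \<Longrightarrow> w \<in> W \<Longrightarrow> z \<in> W"
  by (induction rule: converse_rtrancl_induct) auto

lemma rooted_W:
  assumes "finite U" "rooted (Wset U F g) (A \<inter> (Wset U F g \<times> Wset U F g))"
  shows "\<exists>\<rho>\<in>Wset U F g. (\<forall>x. (x,\<rho>) \<notin> A \<inter> (Wset U F g \<times> Wset U F g)) \<and>
           (\<forall>v\<in>Wset U F g. (\<rho>,v) \<in> (A \<inter> (Wset U F g \<times> Wset U F g))\<^sup>*)"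
proof -
  have "finite (Wset U F g)" using assms(1) unfolding Wset_def by simp
  then show ?thesis using assms(2) rooted_iff[of "Wset U F g" "A \<inter> (Wset U F g \<times> Wset U F g)"] by blast
qed

lemma rooted_W_intro:
  assumes "finite W" "\<rho> \<in> W" "\<forall>x. (x,\<rho>) \<notin> A \<inter> (W \<times> W)" "\<forall>v\<in>W. (\<rho>,v) \<in> (A \<inter> (W \<times> W))\<^sup>*"
  shows "rooted W (A \<inter> (W \<times> W))"
  using rooted_iff[of W "A \<inter> (W \<times> W)"] assms by blast

context sett begin

lemma dir1:
  assumes lab: "gene_labelling V A Gs G k F" and GX: "\<forall>x\<in>X. G x \<subseteq> Gs" and fG: "finite Gs"
    and S_def: "S = (\<Union>x\<in>X \<inter> D. G x) \<inter> (\<Union>x\<in>X - D. G x)"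
    and G'_def: "G' = G(q1 := S, v1 := S)"
  shows "admits_labelling VN AN Gs G' k \<and> admits_labelling VQ AQ Gs G' k"
proof -
  have Fsub: "\<forall>v\<in>V. F v \<subseteq> Gs" and Fleaf: "\<forall>x\<in>X. F x = G x" and Fcard: "\<forall>v\<in>V. card (F v) \<le> k"
    and Froot: "\<forall>g\<in>Gs. Wset V F g \<noteq> {} \<longrightarrow> rooted (Wset V F g) (A \<inter> (Wset V F g \<times> Wset V F g))"
    using lab[unfolded gl_iff, folded XL] by blast+
  have rootW: "\<exists>\<rho>\<in>Wset V F g. (\<forall>x. (x,\<rho>) \<notin> A \<inter> (Wset V F g \<times> Wset V F g)) \<and>
           (\<forall>v\<in>Wset V F g. (\<rho>,v) \<in> (A \<inter> (Wset V F g \<times> Wset V F g))\<^sup>*)"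
    if "g \<in> Gs" "Wset V F g \<noteq> {}" for g
  proof -
    have "rooted (Wset V F g) (A \<inter> (Wset V F g \<times> Wset V F g))" using Froot that by blast
    then show ?thesis by (rule rooted_W[OF finV])
  qed
  have E: "g \<in> F u1 \<and> (u1,z) \<in> (A \<inter> (Wset V F g \<inter> D) \<times> (Wset V F g \<inter> D))\<^sup>*"
    if g: "g \<in> Gs" and w: "w \<in> Wset V F g - D" and z: "z \<in> Wset V F g \<inter> D" for g w z
  proof -
    define W where "W = Wset V F g"
    define R where "R = A \<inter> W \<times> W"
    obtain \<rho> where \<rho>: "\<rho> \<in> W" "\<forall>x. (x,\<rho>) \<notin> R" "\<forall>v\<in>W. (\<rho>,v) \<in> R\<^sup>*"
      using rootW[OF g] w unfolding W_def R_def by blast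
    have RA: "R\<^sup>* \<subseteq> A\<^sup>*" unfolding R_def by (simp add: rtrancl_mono)
    have "(\<rho>,w) \<in> A\<^sup>*" using \<rho>(3) w RA unfolding W_def by blast
    then have "\<rho> \<notin> D" using anc_notD w by blast
    moreover have "(\<rho>,z) \<in> R\<^sup>*" using \<rho>(3) z unfolding W_def by blast
    ultimately obtain a b where ab: "(a,b) \<in> R" "a \<notin> D" "b \<in> D" "(b,z) \<in> R\<^sup>*"
      using entry[of \<rho> z R D] z by blast
    have "b = u1" using K ab unfolding R_def by blast
    then have "g \<in> F u1" using ab(1) unfolding R_def W_def Wset_def by blast
    moreover have "(u1,z) \<in> (R \<inter> D \<times> D)\<^sup>*"
    proof (rule restrict_fwd)
      show "(u1,z) \<in> R\<^sup>*" using ab(4) \<open>b = u1\<close> by simp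
      show "u1 \<in> D" by (rule u1D)
      show "\<forall>a b. (a, b) \<in> R \<longrightarrow> a \<in> D \<longrightarrow> b \<in> D" using Dcl unfolding R_def by blast
    qed
    moreover have "R \<inter> D \<times> D = A \<inter> (W \<inter> D) \<times> (W \<inter> D)" unfolding R_def by blast
    ultimately show ?thesis unfolding W_def by simp
  qed
  have Sin: "\<exists>x0\<in>X \<inter> D. g \<in> G x0" "\<exists>x1\<in>X - D. g \<in> G x1" if "g \<in> S" for g
    using that S_def by auto
  have SGs: "S \<subseteq> Gs" using S_def GX by auto
  have SF: "S \<subseteq> F u1"
  proof
    fix g assume gS: "g \<in> S"
    obtain x0 where x0: "x0 \<in> X \<inter> D" "g \<in> G x0" using Sin[OF gS] by blast
    obtain x1 where x1: "x1 \<in> X - D" "g \<in> G x1" using Sin[OF gS] by blast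
    have "x0 \<in> Wset V F g \<inter> D" "x1 \<in> Wset V F g - D" using x0 x1 Fleaf XV unfolding Wset_def by auto
    then show "g \<in> F u1" using E SGs gS by blast
  qed
  have cardS: "card S \<le> k"
  proof -
    have "finite (F u1)" using Fsub u1V fG finite_subset by blast
    then have "card S \<le> card (F u1)" using SF card_mono by blast
    then show ?thesis using Fcard u1V by fastforce
  qed
  have G'q: "G' q1 = S" "G' v1 = S" using G'_def by auto
  have G'V: "x \<in> V \<Longrightarrow> G' x = G x" for x using G'_def q1V v1V by auto
  define F1 where "F1 = (\<lambda>v. if v = q1 then S else F v)"
  have lab1: "gene_labelling VN AN Gs G' k F1"
    unfolding gl_iff
  proof (intro conjI ballI impI)
    fix v assume "v \<in> VN" then show "F1 v \<subseteq> Gs" using Fsub SGs unfolding F1_def VN_eq by auto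
  next
    fix x assume "x \<in> leaves VN AN" then show "F1 x = G' x"
      using leavesN1 Fleaf G'q G'V XV q1V unfolding F1_def by auto
  next
    fix v assume "v \<in> VN" then show "card (F1 v) \<le> k" using Fcard cardS unfolding F1_def VN_eq by auto
  next
    fix g assume g: "g \<in> Gs" and ne: "Wset VN F1 g \<noteq> {}"
    define W where "W = Wset V F g"
    define R where "R = A \<inter> W \<times> W"
    define W1 where "W1 = Wset VN F1 g"
    have W1eq: "W1 = (W - D) \<union> (if g \<in> S then {q1} else {})"
      unfolding W1_def W_def Wset_def F1_def VN_eq using q1V by auto
    have WmD: "W - D \<noteq> {}"
    proof (cases "g \<in> S")
      case True
      then obtain x1 where x1: "x1 \<in> X - D" "g \<in> G x1" using Sin by blast
      then have "x1 \<in> W - D" using Fleaf XV unfolding W_def Wset_def by auto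
      then show ?thesis by blast
    next
      case False then show ?thesis using ne W1eq W1_def by auto
    qed
    then have Wne: "W \<noteq> {}" by blast
    obtain \<rho> where \<rho>: "\<rho> \<in> W" "\<forall>x. (x,\<rho>) \<notin> R" "\<forall>v\<in>W. (\<rho>,v) \<in> R\<^sup>*"
      using rootW[OF g] Wne unfolding W_def R_def by blast
    have RA: "R\<^sup>* \<subseteq> A\<^sup>*" unfolding R_def by (simp add: rtrancl_mono)
    have \<rho>D: "\<rho> \<notin> D"
    proof -
      obtain w where w: "w \<in> W - D" using WmD by blast
      then have "(\<rho>,w) \<in> A\<^sup>*" using \<rho>(3) RA by blast
      then show ?thesis using anc_notD w by blast
    qed
    have WV: "W \<subseteq> V" unfolding W_def Wset_def by auto
    define R1 where "R1 = AN \<inter> W1 \<times> W1"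
    have bk: "(\<rho>,w) \<in> R1\<^sup>*" if w: "w \<in> W - D" for w
    proof -
      have "\<forall>z. (z,w) \<in> R\<^sup>* \<longrightarrow> z \<in> W - D"
      proof (intro allI impI)
        fix z assume z: "(z,w) \<in> R\<^sup>*"
        then have "z \<in> W" using anc_in[of z w A W] w unfolding R_def by blast
        moreover have "z \<notin> D" using anc_notD[of z w] z RA w by blast
        ultimately show "z \<in> W - D" by blast
      qed
      moreover have "(\<rho>,w) \<in> R\<^sup>*" using \<rho>(3) w by blast
      ultimately have "(\<rho>,w) \<in> (R \<inter> (W - D) \<times> (W - D))\<^sup>*" using restrict_back[of \<rho> w R "W - D"] by blast
      moreover have "R \<inter> (W - D) \<times> (W - D) \<subseteq> R1"
      proof
        fix p assume "p \<in> R \<inter> (W - D) \<times> (W - D)"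
        then obtain a b where "p = (a,b)" "(a,b) \<in> A" "a \<in> W - D" "b \<in> W - D" unfolding R_def by blast
        moreover have "(a,b) \<in> AN" using AN_char calculation WV by blast
        ultimately show "p \<in> R1" unfolding R1_def W1eq by blast
      qed
      ultimately show ?thesis using rtrancl_mono by blast
    qed
    have "rooted W1 R1"
      unfolding R1_def
    proof (rule rooted_W_intro)
      show "finite W1" unfolding W1_def Wset_def using finVN by simp
      show "\<rho> \<in> W1" using \<rho>(1) \<rho>D W1eq by simp
      show "\<forall>x. (x, \<rho>) \<notin> AN \<inter> W1 \<times> W1"
      proof (intro allI notI)
        fix x assume "(x, \<rho>) \<in> AN \<inter> W1 \<times> W1"
        then have "x \<in> V - D" "(x,\<rho>) \<in> A" "x \<in> W1" using AN_char \<rho>(1) WV q1V by auto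
        then have "(x,\<rho>) \<in> R" unfolding R_def W1eq using \<rho>(1) q1V by (auto split: if_splits)
        then show False using \<rho>(2) by blast
      qed
      show "\<forall>v\<in>W1. (\<rho>, v) \<in> (AN \<inter> W1 \<times> W1)\<^sup>*"
      proof
        fix v assume v: "v \<in> W1"
        show "(\<rho>, v) \<in> (AN \<inter> W1 \<times> W1)\<^sup>*"
        proof (cases "v = q1")
          case False then show ?thesis using bk v W1eq unfolding R1_def by (auto split: if_splits)
        next
          case True
          then have gS: "g \<in> S" using v W1eq q1V WV by (auto split: if_splits)
          obtain x0 where x0: "x0 \<in> X \<inter> D" "g \<in> G x0" using Sin[OF gS] by blast
          then have x0W: "x0 \<in> W" using Fleaf XV unfolding W_def Wset_def by auto
          then obtain a b where ab: "(\<rho>,a) \<in> R\<^sup>*" "(a,b) \<in> R" "a \<notin> D" "b \<in> D"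
            using entry[of \<rho> x0 R D] \<rho>(3) \<rho>D x0 by blast
          have aW: "a \<in> W" using ab(2) unfolding R_def by auto
          have "b = u1" using K ab unfolding R_def by blast
          then have "(a,q1) \<in> AN" using AN_char ab aW WV unfolding R_def by auto
          moreover have "a \<in> W1" "q1 \<in> W1" using aW ab(3) W1eq gS by auto
          ultimately have "(a,q1) \<in> R1" unfolding R1_def by auto
          moreover have "(\<rho>,a) \<in> R1\<^sup>*" using bk aW ab(3) by blast
          ultimately show ?thesis using True unfolding R1_def by (meson rtrancl.rtrancl_into_rtrancl)
        qed
      qed
    qed
    then show "rooted (Wset VN F1 g) (AN \<inter> Wset VN F1 g \<times> Wset VN F1 g)" unfolding R1_def W1_def .
  qed
  define F2 where "F2 = (\<lambda>v. if v = r1 \<or> v = v1 then S else F v)"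
  have lab2: "gene_labelling VQ AQ Gs G' k F2"
    unfolding gl_iff
  proof (intro conjI ballI impI)
    fix v assume "v \<in> VQ" then show "F2 v \<subseteq> Gs" using Fsub SGs DV unfolding F2_def VQ_eq by auto
  next
    fix x assume "x \<in> leaves VQ AQ" then show "F2 x = G' x"
      using leavesQ1 Fleaf G'q G'V XV r1V v1V unfolding F2_def by auto
  next
    fix v assume "v \<in> VQ" then show "card (F2 v) \<le> k" using Fcard cardS DV unfolding F2_def VQ_eq by auto
  next
    fix g assume g: "g \<in> Gs" and ne: "Wset VQ F2 g \<noteq> {}"
    define W where "W = Wset V F g"
    define R where "R = A \<inter> W \<times> W"
    define W2 where "W2 = Wset VQ F2 g"
    have W2eq: "W2 = (W \<inter> D) \<union> (if g \<in> S then {r1, v1} else {})"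
      unfolding W2_def W_def Wset_def F2_def VQ_eq using r1V v1V DV by auto
    have WV: "W \<subseteq> V" unfolding W_def Wset_def by auto
    have finW2: "finite W2" unfolding W2_def Wset_def using finVQ by simp
    define R2 where "R2 = AQ \<inter> W2 \<times> W2"
    have sub: "A \<inter> (W \<inter> D) \<times> (W \<inter> D) \<subseteq> R2" unfolding R2_def W2eq using AQ_char by auto
    have "rooted W2 R2"
    proof (cases "g \<in> S")
      case gS: True
      then obtain x1 where x1: "x1 \<in> X - D" "g \<in> G x1" using Sin by blast
      then have x1W: "x1 \<in> W - D" using Fleaf XV unfolding W_def Wset_def by auto
      show ?thesis unfolding R2_def
      proof (rule rooted_W_intro[OF finW2])
        show "r1 \<in> W2" using W2eq gS by simp
        show "\<forall>x. (x, r1) \<notin> AQ \<inter> W2 \<times> W2" using AQ_char r1V rv DV u1V AV by auto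
        show "\<forall>v\<in>W2. (r1, v) \<in> (AQ \<inter> W2 \<times> W2)\<^sup>*"
        proof
          fix v assume v: "v \<in> W2"
          have u1W2: "u1 \<in> W2" using SF gS W2eq u1D u1V unfolding W_def Wset_def by auto
          have r1W2: "r1 \<in> W2" "v1 \<in> W2" using W2eq gS by auto
          show "(r1, v) \<in> (AQ \<inter> W2 \<times> W2)\<^sup>*"
          proof (cases "v \<in> D")
            case True
            then have "v \<in> W \<inter> D" using v W2eq r1V v1V DV by (auto split: if_splits)
            then have "(u1,v) \<in> (A \<inter> (W \<inter> D) \<times> (W \<inter> D))\<^sup>*" using E g x1W unfolding W_def by blast
            then have "(u1,v) \<in> R2\<^sup>*" using sub rtrancl_mono by blast
            moreover have "(r1,u1) \<in> R2" using AQ_char u1W2 r1W2 unfolding R2_def by auto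
            ultimately show ?thesis unfolding R2_def by (meson converse_rtrancl_into_rtrancl)
          next
            case False
            then have "v = r1 \<or> v = v1" using v W2eq by (auto split: if_splits)
            moreover have "(r1,v1) \<in> AQ \<inter> W2 \<times> W2" using AQ_char r1W2 by auto
            ultimately show ?thesis by auto
          qed
        qed
      qed
    next
      case gS: False
      then have W2D: "W2 = W \<inter> D" using W2eq by simp
      then have WDne: "W \<inter> D \<noteq> {}" using ne W2_def by simp
      show ?thesis
      proof (cases "W - D = {}")
        case False
        then obtain w where w: "w \<in> W - D" by blast
        obtain z where z: "z \<in> W \<inter> D" using WDne by blast
        have gu: "g \<in> F u1" using E[OF g] w z unfolding W_def by blast
        show ?thesis unfolding R2_def
        proof (rule rooted_W_intro[OF finW2])
          show "u1 \<in> W2" using gu W2D u1D u1V unfolding W_def Wset_def by auto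
          show "\<forall>x. (x, u1) \<notin> AQ \<inter> W2 \<times> W2" using AQ_char W2D noback DV r1V by auto
          show "\<forall>v\<in>W2. (u1, v) \<in> (AQ \<inter> W2 \<times> W2)\<^sup>*"
            using E[OF g] w sub rtrancl_mono W2D unfolding W_def R2_def by blast
        qed
      next
        case True
        then have WD: "W \<subseteq> D" by blast
        then have Wne: "W \<noteq> {}" using WDne by blast
        obtain \<rho> where \<rho>: "\<rho> \<in> W" "\<forall>x. (x,\<rho>) \<notin> R" "\<forall>v\<in>W. (\<rho>,v) \<in> R\<^sup>*"
          using rootW[OF g] Wne unfolding W_def R_def by blast
        have W2W: "W2 = W" using W2D WD by blast
        show ?thesis unfolding R2_def
        proof (rule rooted_W_intro[OF finW2])
          show "\<rho> \<in> W2" using \<rho>(1) W2W by simp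
          show "\<forall>x. (x, \<rho>) \<notin> AQ \<inter> W2 \<times> W2" using AQ_char W2W WD \<rho>(2) r1V v1V DV unfolding R_def by auto
          have "R \<subseteq> AQ \<inter> W2 \<times> W2" using sub W2W WD unfolding R_def R2_def by auto
          then show "\<forall>v\<in>W2. (\<rho>, v) \<in> (AQ \<inter> W2 \<times> W2)\<^sup>*" using \<rho>(3) W2W rtrancl_mono by blast
        qed
      qed
    qed
    then show "rooted (Wset VQ F2 g) (AQ \<inter> Wset VQ F2 g \<times> Wset VQ F2 g)" unfolding R2_def W2_def .
  qed
  show ?thesis using lab1 lab2 unfolding admits_labelling_def by blast
qed

end



lemma closed_star: "(x,y) \<in> R\<^sup>* \<Longrightarrow> x \<in> S \<Longrightarrow> \<forall>a b. (a,b) \<in> R \<longrightarrow> a \<in> S \<longrightarrow> b \<in> S \<Longrightarrow> y \<in> S"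
  by (induction rule: rtrancl_induct) auto

context sett begin

lemma AQD: "(a,b) \<in> AQ \<Longrightarrow> a \<in> D \<Longrightarrow> b \<in> D \<and> (a,b) \<in> A"
  using AQ_char Dcl DV r1V by blast

lemma noout_q1: "(q1,w) \<notin> AN" using AN_char q1V by blast

lemma dir2:
  assumes lab1: "gene_labelling VN AN Gs G' k F1" and lab2: "gene_labelling VQ AQ Gs G' k F2"
    and GX: "\<forall>x\<in>X. G x \<subseteq> Gs" and fG: "finite Gs"
    and S_def: "S = (\<Union>x\<in>X \<inter> D. G x) \<inter> (\<Union>x\<in>X - D. G x)"
    and G'_def: "G' = G(q1 := S, v1 := S)"
  shows "admits_labelling V A Gs G k"
proof -
  define Lin where "Lin = (\<Union>x\<in>X \<inter> D. G x)"
  define Lout where "Lout = (\<Union>x\<in>X - D. G x)"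
  have SL: "S = Lin \<inter> Lout" using S_def Lin_def Lout_def by simp
  have G'q: "G' q1 = S" "G' v1 = S" using G'_def by auto
  have G'V: "x \<in> V \<Longrightarrow> G' x = G x" for x using G'_def q1V v1V by auto
  have F1sub: "\<forall>v\<in>VN. F1 v \<subseteq> Gs" and F1leaf: "\<forall>x\<in>leaves VN AN. F1 x = G' x"
    and F1card: "\<forall>v\<in>VN. card (F1 v) \<le> k"
    and F1root: "\<forall>g\<in>Gs. Wset VN F1 g \<noteq> {} \<longrightarrow> rooted (Wset VN F1 g) (AN \<inter> (Wset VN F1 g \<times> Wset VN F1 g))"
    using lab1[unfolded gl_iff] by blast+
  have F2sub: "\<forall>v\<in>VQ. F2 v \<subseteq> Gs" and F2leaf: "\<forall>x\<in>leaves VQ AQ. F2 x = G' x"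
    and F2card: "\<forall>v\<in>VQ. card (F2 v) \<le> k"
    and F2root: "\<forall>g\<in>Gs. Wset VQ F2 g \<noteq> {} \<longrightarrow> rooted (Wset VQ F2 g) (AQ \<inter> (Wset VQ F2 g \<times> Wset VQ F2 g))"
    using lab2[unfolded gl_iff] by blast+
  have F1q: "F1 q1 = S" using F1leaf leavesN1 G'q by auto
  have F1X: "x \<in> X - D \<Longrightarrow> F1 x = G x" for x using F1leaf leavesN1 G'V XV by auto
  have F2v: "F2 v1 = S" using F2leaf leavesQ1 G'q by auto
  have F2X: "x \<in> X \<inter> D \<Longrightarrow> F2 x = G x" for x using F2leaf leavesQ1 G'V XV by auto
  have rootW1: "\<exists>\<rho>\<in>Wset VN F1 g. (\<forall>x. (x,\<rho>) \<notin> AN \<inter> (Wset VN F1 g \<times> Wset VN F1 g)) \<and>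
           (\<forall>v\<in>Wset VN F1 g. (\<rho>,v) \<in> (AN \<inter> (Wset VN F1 g \<times> Wset VN F1 g))\<^sup>*)"
    if "g \<in> Gs" "Wset VN F1 g \<noteq> {}" for g
  proof -
    have "rooted (Wset VN F1 g) (AN \<inter> (Wset VN F1 g \<times> Wset VN F1 g))" using F1root that by blast
    then show ?thesis by (rule rooted_W[OF finVN])
  qed
  have rootW2: "\<exists>\<rho>\<in>Wset VQ F2 g. (\<forall>x. (x,\<rho>) \<notin> AQ \<inter> (Wset VQ F2 g \<times> Wset VQ F2 g)) \<and>
           (\<forall>v\<in>Wset VQ F2 g. (\<rho>,v) \<in> (AQ \<inter> (Wset VQ F2 g \<times> Wset VQ F2 g))\<^sup>*)"
    if "g \<in> Gs" "Wset VQ F2 g \<noteq> {}" for g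
  proof -
    have "rooted (Wset VQ F2 g) (AQ \<inter> (Wset VQ F2 g \<times> Wset VQ F2 g))" using F2root that by blast
    then show ?thesis by (rule rooted_W[OF finVQ])
  qed
  have QE: "u1 \<in> W2 \<and> (u1,z) \<in> (A \<inter> (W2 \<inter> D) \<times> (W2 \<inter> D))\<^sup>*"
    if W2: "W2 = Wset VQ F2 g" and r: "(\<rho>,z) \<in> (AQ \<inter> W2 \<times> W2)\<^sup>*" and \<rho>D: "\<rho> \<notin> D" and z: "z \<in> W2 \<inter> D"
    for W2 g \<rho> z
  proof -
    define R2 where "R2 = AQ \<inter> W2 \<times> W2"
    obtain a b where ab: "(a,b) \<in> R2" "a \<notin> D" "b \<in> D" "(b,z) \<in> R2\<^sup>*"
      using entry[of \<rho> z R2 D] r \<rho>D z unfolding R2_def by blast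
    have "b = u1" using ab(1,2,3) AQ_char DV v1V unfolding R2_def by blast
    then have u1W: "u1 \<in> W2" using ab(1) unfolding R2_def by blast
    have "(u1,z) \<in> (R2 \<inter> D \<times> D)\<^sup>*"
    proof (rule restrict_fwd)
      show "(u1,z) \<in> R2\<^sup>*" using ab(4) \<open>b = u1\<close> by simp
      show "u1 \<in> D" by (rule u1D)
      show "\<forall>a b. (a, b) \<in> R2 \<longrightarrow> a \<in> D \<longrightarrow> b \<in> D" using AQD unfolding R2_def by blast
    qed
    moreover have "R2 \<inter> D \<times> D = A \<inter> (W2 \<inter> D) \<times> (W2 \<inter> D)"
      unfolding R2_def using AQD AQ_char by blast
    ultimately show ?thesis using u1W by simp
  qed
  define F where "F = (\<lambda>v. if v \<in> D then F2 v \<inter> Lin else F1 v - (Lin - Lout))"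
  have "gene_labelling V A Gs G k F"
    unfolding gl_iff
  proof (intro conjI ballI impI)
    fix v assume "v \<in> V" then show "F v \<subseteq> Gs" using F1sub F2sub unfolding F_def VN_eq VQ_eq by auto
  next
    fix x assume x: "x \<in> leaves V A"
    then have xX: "x \<in> X" using XL by simp
    show "F x = G x"
    proof (cases "x \<in> D")
      case True
      then have "F2 x = G x" "G x \<subseteq> Lin" using F2X xX Lin_def by auto
      then show ?thesis using True unfolding F_def by auto
    next
      case False
      then have "F1 x = G x" "G x \<subseteq> Lout" using F1X xX Lout_def by auto
      then show ?thesis using False unfolding F_def by auto
    qed
  next
    fix v assume v: "v \<in> V"
    show "card (F v) \<le> k"
    proof (cases "v \<in> D")
      case True
      then have "v \<in> VQ" using VQ_eq by simp
      then have "finite (F2 v)" "card (F2 v) \<le> k" using F2sub F2card fG finite_subset by blast+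
      then have "card (F2 v \<inter> Lin) \<le> k" using card_mono[of "F2 v" "F2 v \<inter> Lin"] by simp
      then show ?thesis using True unfolding F_def by simp
    next
      case False
      then have "v \<in> VN" using VN_eq v by simp
      then have "finite (F1 v)" "card (F1 v) \<le> k" using F1sub F1card fG finite_subset by blast+
      then have "card (F1 v - (Lin - Lout)) \<le> k" using card_mono[of "F1 v" "F1 v - (Lin - Lout)"] by simp
      then show ?thesis using False unfolding F_def by simp
    qed
  next
    fix g assume g: "g \<in> Gs" and ne: "Wset V F g \<noteq> {}"
    define W where "W = Wset V F g"
    define W1 where "W1 = Wset VN F1 g"
    define W2 where "W2 = Wset VQ F2 g"
    define R1 where "R1 = AN \<inter> W1 \<times> W1"
    define R2 where "R2 = AQ \<inter> W2 \<times> W2"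
    have finW: "finite W" unfolding W_def Wset_def using finV by simp
    have WD: "W \<inter> D = (if g \<in> Lin then W2 \<inter> D else {})"
      unfolding W_def W2_def Wset_def F_def VQ_eq using DV by auto
    have WmD: "W - D = (if g \<in> Lin - Lout then {} else W1 - {q1})"
      unfolding W_def W1_def Wset_def F_def VN_eq using q1V by auto
    have Wsplit: "W = (W \<inter> D) \<union> (W - D)" by blast
    have W1V: "W1 - {q1} \<subseteq> V - D" unfolding W1_def Wset_def VN_eq by auto
    have R1A: "R1 \<inter> (W1 - {q1}) \<times> (W1 - {q1}) = A \<inter> (W1 - {q1}) \<times> (W1 - {q1})"
      unfolding R1_def using AN_char W1V by blast
    have "rooted W (A \<inter> W \<times> W)"
    proof (cases "g \<in> Lin")
      case gL: False
      have q1W1: "q1 \<notin> W1" using F1q SL gL unfolding W1_def Wset_def by auto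
      have WW1: "W = W1" using WD WmD gL q1W1 Wsplit by auto
      then have "W1 \<noteq> {}" using ne W_def by simp
      then have "rooted W1 R1" using F1root g unfolding W1_def R1_def by blast
      moreover have "R1 = A \<inter> W1 \<times> W1" using R1A q1W1 unfolding R1_def by simp
      ultimately show ?thesis using WW1 by simp
    next
      case gL: True
      show ?thesis
      proof (cases "g \<in> Lout")
        case gO: False
        have WW2: "W = W2 \<inter> D" using WD WmD gL gO Wsplit by auto
        then have W2ne: "W2 \<noteq> {}" using ne W_def by auto
        obtain \<rho> where \<rho>: "\<rho> \<in> W2" "\<forall>x. (x,\<rho>) \<notin> R2" "\<forall>v\<in>W2. (\<rho>,v) \<in> R2\<^sup>*"
          using rootW2[OF g] W2ne unfolding W2_def R2_def by blast
        show ?thesis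
        proof (cases "\<rho> \<in> D")
          case True
          show ?thesis
          proof (rule rooted_W_intro[OF finW])
            show "\<rho> \<in> W" using WW2 True \<rho>(1) by simp
            show "\<forall>x. (x, \<rho>) \<notin> A \<inter> W \<times> W"
              using \<rho>(2) WW2 AQ_char unfolding R2_def by blast
            show "\<forall>v\<in>W. (\<rho>, v) \<in> (A \<inter> W \<times> W)\<^sup>*"
            proof
              fix v assume v: "v \<in> W"
              have "(\<rho>,v) \<in> (R2 \<inter> D \<times> D)\<^sup>*"
              proof (rule restrict_fwd)
                show "(\<rho>,v) \<in> R2\<^sup>*" using \<rho>(3) v WW2 by blast
                show "\<rho> \<in> D" by (rule True)
                show "\<forall>a b. (a, b) \<in> R2 \<longrightarrow> a \<in> D \<longrightarrow> b \<in> D" using AQD unfolding R2_def by blast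
              qed
              moreover have "R2 \<inter> D \<times> D = A \<inter> W \<times> W" unfolding R2_def WW2 using AQD AQ_char by blast
              ultimately show "(\<rho>, v) \<in> (A \<inter> W \<times> W)\<^sup>*" by simp
            qed
          qed
        next
          case False
          obtain z where z: "z \<in> W" using ne W_def by blast
          have u1W2: "u1 \<in> W2" using QE[OF W2_def, of \<rho> z] \<rho>(3) z WW2 False unfolding R2_def by blast
          show ?thesis
          proof (rule rooted_W_intro[OF finW])
            show "u1 \<in> W" using WW2 u1W2 u1D by simp
            show "\<forall>x. (x, u1) \<notin> A \<inter> W \<times> W" using noback WW2 by blast
            show "\<forall>v\<in>W. (u1, v) \<in> (A \<inter> W \<times> W)\<^sup>*"
              using QE[OF W2_def, of \<rho>] \<rho>(3) WW2 False unfolding R2_def by blast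
          qed
        qed
      next
        case gO: True
        have gS: "g \<in> S" using SL gL gO by simp
        have WDe: "W \<inter> D = W2 \<inter> D" and WmDe: "W - D = W1 - {q1}" using WD WmD gL gO by auto
        obtain x1 where x1: "x1 \<in> X - D" "g \<in> G x1" using gO Lout_def by blast
        have x1W1: "x1 \<in> W1" "x1 \<noteq> q1" using x1 F1X XV q1V unfolding W1_def Wset_def VN_eq by auto
        obtain x0 where x0: "x0 \<in> X \<inter> D" "g \<in> G x0" using gL Lin_def by blast
        have x0W2: "x0 \<in> W2 \<inter> D" using x0 F2X unfolding W2_def Wset_def VQ_eq by auto
        have q1W1: "q1 \<in> W1" using F1q gS unfolding W1_def Wset_def VN_eq by auto
        have v1W2: "v1 \<in> W2" using F2v gS unfolding W2_def Wset_def VQ_eq by auto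
        obtain \<rho>1 where \<rho>1: "\<rho>1 \<in> W1" "\<forall>x. (x,\<rho>1) \<notin> R1" "\<forall>v\<in>W1. (\<rho>1,v) \<in> R1\<^sup>*"
          using rootW1[OF g] q1W1 unfolding W1_def R1_def by blast
        obtain \<rho>2 where \<rho>2: "\<rho>2 \<in> W2" "\<forall>x. (x,\<rho>2) \<notin> R2" "\<forall>v\<in>W2. (\<rho>2,v) \<in> R2\<^sup>*"
          using rootW2[OF g] v1W2 unfolding W2_def R2_def by blast
        have nq: "z = q1" if "(q1, z) \<in> R1\<^sup>*" for z
        proof (rule ccontr)
          assume "z \<noteq> q1"
          then have "(q1,z) \<in> R1\<^sup>+" using that by (simp add: rtrancl_eq_or_trancl)
          then obtain y where "(q1,y) \<in> R1" by (blast dest: tranclD)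
          then show False using noout_q1 unfolding R1_def by blast
        qed
        have \<rho>1q: "\<rho>1 \<noteq> q1" using nq \<rho>1(3) x1W1 by blast
        have \<rho>1W: "\<rho>1 \<in> W - D" using WmDe \<rho>1(1) \<rho>1q by simp
        have \<rho>2D: "\<rho>2 \<notin> D"
        proof
          assume "\<rho>2 \<in> D"
          moreover have "(\<rho>2, v1) \<in> R2\<^sup>*" using \<rho>2(3) v1W2 by blast
          ultimately have "v1 \<in> D" using closed_star[of \<rho>2 v1 R2 D] AQD unfolding R2_def by blast
          then show False using DV v1V by blast
        qed
        have QE': "u1 \<in> W2 \<and> (u1,z) \<in> (A \<inter> (W2 \<inter> D) \<times> (W2 \<inter> D))\<^sup>*" if "z \<in> W2 \<inter> D" for z
          using QE[OF W2_def, of \<rho>2 z] \<rho>2(3) that \<rho>2D unfolding R2_def by blast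
        have u1W: "u1 \<in> W" using QE'[OF x0W2] WDe u1D by blast
        have reachO: "(\<rho>1, z) \<in> (A \<inter> W \<times> W)\<^sup>*" if z: "z \<in> W - D" for z
        proof -
          have zW1: "z \<in> W1 - {q1}" using z WmDe by simp
          have "\<forall>y. (y,z) \<in> R1\<^sup>* \<longrightarrow> y \<in> W1 - {q1}"
          proof (intro allI impI)
            fix y assume y: "(y,z) \<in> R1\<^sup>*"
            then have "y \<in> W1" using anc_in[of y z AN W1] zW1 unfolding R1_def by blast
            moreover have "y \<noteq> q1" using nq y zW1 by blast
            ultimately show "y \<in> W1 - {q1}" by blast
          qed
          moreover have r: "(\<rho>1,z) \<in> R1\<^sup>*" using \<rho>1(3) zW1 by blast
          ultimately have r': "(\<rho>1,z) \<in> (R1 \<inter> (W1 - {q1}) \<times> (W1 - {q1}))\<^sup>*"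
            using restrict_back[of \<rho>1 z R1 "W1 - {q1}"] by simp
          have sub: "R1 \<inter> (W1 - {q1}) \<times> (W1 - {q1}) \<subseteq> A \<inter> W \<times> W" using WmDe R1A by blast
          show ?thesis using subsetD[OF rtrancl_mono[OF sub] r'] .
        qed
        show ?thesis
        proof (rule rooted_W_intro[OF finW])
          show "\<rho>1 \<in> W" using \<rho>1W by blast
          show "\<forall>x. (x, \<rho>1) \<notin> A \<inter> W \<times> W"
          proof (intro allI notI)
            fix x assume x: "(x, \<rho>1) \<in> A \<inter> W \<times> W"
            show False
            proof (cases "x \<in> D")
              case True
              have "(x,\<rho>1) \<in> A" using x by simp
              then have "\<rho>1 \<in> D" using Dcl True by simp
              then show False using \<rho>1W by simp
            next
              case False
              then have "x \<in> W1 - {q1}" using x WmDe by blast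
              then have "(x,\<rho>1) \<in> R1" using R1A x \<rho>1W WmDe by blast
              then show False using \<rho>1(2) by blast
            qed
          qed
          show "\<forall>v\<in>W. (\<rho>1, v) \<in> (A \<inter> W \<times> W)\<^sup>*"
          proof
            fix v assume v: "v \<in> W"
            show "(\<rho>1, v) \<in> (A \<inter> W \<times> W)\<^sup>*"
            proof (cases "v \<in> D")
              case False then show ?thesis using reachO v by blast
            next
              case True
              have "(\<rho>1, q1) \<in> R1\<^sup>*" using \<rho>1(3) q1W1 by blast
              then have "(\<rho>1, q1) \<in> R1\<^sup>+" using \<rho>1q by (simp add: rtrancl_eq_or_trancl)
              then obtain p where p: "(\<rho>1,p) \<in> R1\<^sup>*" "(p,q1) \<in> R1" by (blast dest: tranclD2)
              have "(p,q1) \<in> AN" using p(2) unfolding R1_def by simp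
              then have pV: "p \<in> V - D" "(p,u1) \<in> A" using AN_char[of p q1] q1V by auto
              have pW1: "p \<in> W1" using p(2) unfolding R1_def by blast
              have "p \<noteq> q1" using pV(1) q1V by blast
              then have "p \<in> W1 - {q1}" using pW1 by blast
              then have pW: "p \<in> W - D" unfolding WmDe .
              have a1: "(\<rho>1,p) \<in> (A \<inter> W \<times> W)\<^sup>*" by (rule reachO[OF pW])
              have pW': "p \<in> W" using pW by blast
              have a2: "(p,u1) \<in> A \<inter> W \<times> W" using pV(2) pW' u1W by blast
              have a3: "(u1,v) \<in> (A \<inter> W \<times> W)\<^sup>*"
              proof -
                have "v \<in> W \<inter> D" using v True by simp
                then have "v \<in> W2 \<inter> D" using WDe by simp
                then have b1: "(u1,v) \<in> (A \<inter> (W2 \<inter> D) \<times> (W2 \<inter> D))\<^sup>*" by (rule conjunct2[OF QE'])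
                have b2: "A \<inter> (W2 \<inter> D) \<times> (W2 \<inter> D) \<subseteq> A \<inter> W \<times> W" unfolding WDe[symmetric] by blast
                show ?thesis using subsetD[OF rtrancl_mono[OF b2] b1] .
              qed
              show ?thesis by (rule rtrancl_trans[OF rtrancl_into_rtrancl[OF a1 a2] a3])
            qed
          qed
        qed
      qed
    qed
    then show "rooted (Wset V F g) (A \<inter> Wset V F g \<times> Wset V F g)" unfolding W_def .
  qed
  then show ?thesis unfolding admits_labelling_def by blast
qed

end



theorem lemma5p4:
  fixes V :: "'v set" and A :: "('v \<times> 'v) set" and X :: "'v set"
    and Gs :: "'g set" and G :: "'v \<Rightarrow> 'g set" and k :: nat
    and u1 q1 r1 v1 :: 'v
  assumes "galled_tree V A X"
    and "two_galls A"
    and "finite Gs"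
    and "\<forall>x\<in>X. G x \<subseteq> Gs"
    and "k > 0"
    and "lowest_gall_vertex V A u1"
    and "q1 \<notin> V" and "r1 \<notin> V" and "v1 \<notin> V" and "r1 \<noteq> v1"
  shows "let VN1 = N1_verts V A u1 q1; AN1 = N1_arcs V A u1 q1;
             VQ1 = Q1_verts A u1 r1 v1; AQ1 = Q1_arcs A u1 r1 v1;
             S = (\<Union>x \<in> leaves VQ1 AQ1 - {v1}. G x) \<inter> (\<Union>x \<in> X - leaves VQ1 AQ1. G x);
             G' = G(q1 := S, v1 := S)
         in admits_labelling V A Gs G k \<longleftrightarrow>
            (admits_labelling VN1 AN1 Gs G' k \<and> admits_labelling VQ1 AQ1 Gs G' k)"
proof -
  have pn: "phylo_network V A X" and galled: "\<forall>c d. ucycle A c \<longrightarrow> ucycle A d \<longrightarrow> cycle_edges c \<noteq> cycle_edges d \<longrightarrow>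
        set c \<inter> set d = {}" using assms(1) unfolding galled_tree_def by blast+
  have finV: "finite V" and AV: "A \<subseteq> V \<times> V" and ac: "acyclic A" and XL: "X = leaves V A"
    and rt: "rooted V A" using pn unfolding phylo_network_def digraph_def by blast+
  obtain \<rho>0 where \<rho>0: "\<forall>v\<in>V. (\<rho>0, v) \<in> A\<^sup>*" using rt unfolding rooted_def by blast
  have u1V: "u1 \<in> V" and cov: "covers_gall A u1" and low: "\<forall>w \<in> desc A u1. w \<noteq> u1 \<longrightarrow> \<not> covers_gall A w"
    using assms(6) unfolding lowest_gall_vertex_def by blast+
  obtain C where C: "ucycle A C" "set C \<subseteq> desc A u1" using cov unfolding covers_gall_def by blast
  have u1C: "u1 \<in> set C" using T_core[OF ac galled C low] .
  have K: "\<forall>p w. (p,w) \<in> A \<longrightarrow> p \<notin> desc A u1 \<longrightarrow> w \<in> desc A u1 \<longrightarrow> w = u1"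
  proof (intro allI impI)
    fix p w assume pw: "(p,w) \<in> A" "p \<notin> desc A u1" "w \<in> desc A u1"
    have "p \<in> V" using pw(1) AV by blast
    then have "(\<rho>0, p) \<in> A\<^sup>*" using \<rho>0 by blast
    moreover have "(\<rho>0, u1) \<in> A\<^sup>*" using \<rho>0 u1V by blast
    ultimately show "w = u1" using K_core[OF ac galled C(1) u1C C(2) _ _ pw] by blast
  qed
  interpret sett V A X u1 q1 r1 v1
    using finV AV ac XL u1V K assms(7-10) by (unfold_locales) auto
  define S where "S = (\<Union>x\<in>X \<inter> D. G x) \<inter> (\<Union>x\<in>X - D. G x)"
  have l1: "leaves VQ AQ - {v1} = X \<inter> D" using leavesQ1 XV v1V by auto
  have l2: "X - leaves VQ AQ = X - D" using leavesQ1 XV v1V by auto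
  have Seq: "(\<Union>x \<in> leaves VQ AQ - {v1}. G x) \<inter> (\<Union>x \<in> X - leaves VQ AQ. G x) = S"
    unfolding l1 l2 S_def ..
  have "admits_labelling V A Gs G k \<longleftrightarrow>
        (admits_labelling VN AN Gs (G(q1 := S, v1 := S)) k \<and> admits_labelling VQ AQ Gs (G(q1 := S, v1 := S)) k)"
  proof
    assume "admits_labelling V A Gs G k"
    then obtain F where "gene_labelling V A Gs G k F" unfolding admits_labelling_def by blast
    then show "admits_labelling VN AN Gs (G(q1 := S, v1 := S)) k \<and> admits_labelling VQ AQ Gs (G(q1 := S, v1 := S)) k"
      using dir1[OF _ assms(4,3) S_def refl] by blast
  next
    assume "admits_labelling VN AN Gs (G(q1 := S, v1 := S)) k \<and> admits_labelling VQ AQ Gs (G(q1 := S, v1 := S)) k"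
    then obtain F1 F2 where "gene_labelling VN AN Gs (G(q1 := S, v1 := S)) k F1"
      "gene_labelling VQ AQ Gs (G(q1 := S, v1 := S)) k F2" unfolding admits_labelling_def by blast
    then show "admits_labelling V A Gs G k" using dir2[OF _ _ assms(4,3) S_def refl] by blast
  qed
  then show ?thesis unfolding Let_def Seq .
qed



end
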